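(* Let $(\alpha_1,\alpha_2,\alpha_3)\in[0,1]^3$ with $\alpha_1\ge\alpha_2\ge\alpha_3$. If any of the following holds, then $(\alpha_1,\alpha_2,\alpha_3)$ is not a forcing triple: (a) $\alpha_1<\frac{1+\tau^2}{2}=\frac{52-4\sqrt7}{81}$; (b) $\alpha_2<\frac14$; (c) $\alpha_1+\alpha_2<1$; (d) $\alpha_1=x^2+y^2$ and $\alpha_2=x^2+(1-x-y)^2$ for some nonnegative reals $x,y$ with $x+y\le1$ and $2x^2+(1-x-y)^2<1$.
   Context: $\tau=\frac{4-\sqrt7}{9}$. A $3$-colouring template on an $n$-set $V$ is a triple $(G_1,G_2,G_3)$ of graphs on $V$ (edge sets may overlap). A rainbow triangle is a triple of distinct vertices whose three pairs lie in the three distinct colour classes, one pair per class. A triple $(\alpha_1,\alpha_2,\alpha_3)\in[0,1]^3$ is a forcing triple if for all sufficiently large $n$, every $n$-vertex $3$-colouring template with $|E(G_i)|>\min(\frac{\alpha_i}{2}n^2,\binom n2-1)$ for each $i$ contains a rainbow triangle. *)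

theory Defs
  imports Complex_Main
begin

definition tau :: real where
  "tau = (4 - sqrt 7) / 9"

definition graph_on :: "nat \<Rightarrow> nat set set \<Rightarrow> bool" where
  "graph_on n E \<longleftrightarrow> (\<forall>e\<in>E. e \<subseteq> {..<n} \<and> card e = 2)"

text \<open>A rainbow triangle: three distinct vertices whose three pairs lie in the three
  distinct colour classes, one pair per class (the ordering of a, b, c absorbs the choice
  of which pair goes to which class).\<close>
definition has_rainbow_triangle :: "nat set set \<Rightarrow> nat set set \<Rightarrow> nat set set \<Rightarrow> bool" where
  "has_rainbow_triangle G1 G2 G3 \<longleftrightarrow>
     (\<exists>a b c. a \<noteq> b \<and> b \<noteq> c \<and> a \<noteq> c \<and>
        {a, b} \<in> G1 \<and> {b, c} \<in> G2 \<and> {a, c} \<in> G3)"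

definition edge_threshold :: "real \<Rightarrow> nat \<Rightarrow> real" where
  "edge_threshold \<alpha> n = min (\<alpha> / 2 * (real n)^2) (real (n choose 2) - 1)"

definition forcing_triple :: "real \<Rightarrow> real \<Rightarrow> real \<Rightarrow> bool" where
  "forcing_triple \<alpha>1 \<alpha>2 \<alpha>3 \<longleftrightarrow>
     (\<exists>N. \<forall>n\<ge>N. \<forall>G1 G2 G3.
        graph_on n G1 \<and> graph_on n G2 \<and> graph_on n G3 \<and>
        real (card G1) > edge_threshold \<alpha>1 n \<and>
        real (card G2) > edge_threshold \<alpha>2 n \<and>
        real (card G3) > edge_threshold \<alpha>3 n
        \<longrightarrow> has_rainbow_triangle G1 G2 G3)"

end

theory Submission
  imports Defs
begin


definition KK :: "nat set \<Rightarrow> nat set set" where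
  "KK S = {e. e \<subseteq> S \<and> card e = 2}"

lemma KK_card: "finite S \<Longrightarrow> card (KK S) = card S choose 2"
  unfolding KK_def by (rule n_subsets)

lemma KK_finite: "finite S \<Longrightarrow> finite (KK S)"
  unfolding KK_def by (rule finite_subset[of _ "Pow S"]) auto

lemma card2_pair: "card {a, b} = 2 \<longleftrightarrow> a \<noteq> b"
  by (cases "a = b") auto

lemma KK_mem: "{a, b} \<in> KK S \<longleftrightarrow> a \<noteq> b \<and> a \<in> S \<and> b \<in> S"
  unfolding KK_def by (simp add: card2_pair) blast

lemma KK_graph: "S \<subseteq> {..<n} \<Longrightarrow> graph_on n (KK S)"
  unfolding graph_on_def KK_def by auto

lemma graph_on_Un: "graph_on n A \<Longrightarrow> graph_on n B \<Longrightarrow> graph_on n (A \<union> B)"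
  unfolding graph_on_def by auto

lemma graph_on_Diff: "graph_on n A \<Longrightarrow> graph_on n (A - B)"
  unfolding graph_on_def by auto

lemma KK_disj: assumes "X \<inter> Y = {}" shows "KK X \<inter> KK Y = {}"
proof -
  { fix e assume "e \<in> KK X" "e \<in> KK Y"
    then have "e \<subseteq> X \<inter> Y" "card e = 2" unfolding KK_def by auto
    then have False using assms by auto }
  then show ?thesis by blast
qed

lemma KK_mono: "X \<subseteq> Y \<Longrightarrow> KK X \<subseteq> KK Y"
  unfolding KK_def by auto

lemma choose2_real: "2 * real (m choose 2) = real m * (real m - 1)"
proof (induction m)
  case 0 then show ?case by simp
next
  case (Suc m)
  have "Suc m choose 2 = m + (m choose 2)"
    by (simp add: numeral_2_eq_2)
  then show ?case using Suc by (simp add: algebra_simps)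
qed

lemma lower_bd:
  fixes p :: real and m n :: nat
  assumes "p \<ge> 0" "p \<le> 1" "real m \<ge> p * n - 1"
  shows "real m * (real m - 1) \<ge> p^2 * (real n)^2 - 3 * real n"
proof -
  have "real m * (real m - 1) \<ge> (p*n - 1) * (p*n - 2) - 2"
  proof (cases "real m + (p*n-1) \<ge> 1")
    case True
    have "real m * (real m - 1) - (p*n-1)*(p*n-1-1) = (real m - (p*n-1)) * (real m + (p*n-1) - 1)"
      by (simp add: algebra_simps)
    also have "\<dots> \<ge> 0" using True assms by simp
    finally show ?thesis by (simp add: algebra_simps)
  next
    case False
    have "p*n \<ge> 0" using assms by simp
    have "p * n < 2" using False by linarith
    have "(p*n - 1) * (p*n - 2) \<le> 2"
    proof -
      have "(p*n) * (p*n - 3) \<le> 0"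
        using \<open>p*n \<ge> 0\<close> \<open>p*n<2\<close> by (intro mult_nonneg_nonpos) auto
      then show ?thesis by (simp add: algebra_simps)
    qed
    moreover have "real m * (real m - 1) \<ge> 0" by (cases m) auto
    ultimately show ?thesis by linarith
  qed
  moreover have "p * n \<le> n" using assms by (simp add: mult_left_le_one_le)
  moreover have "(p*n-1)*(p*n-2) - 2 = p^2*(real n)^2 - 3*(p*n)"
    by (simp add: power2_eq_square algebra_simps)
  ultimately show ?thesis by linarith
qed



definition witness :: "real \<Rightarrow> real \<Rightarrow> real \<Rightarrow> bool" where
  "witness b1 b2 b3 \<longleftrightarrow> (\<forall>N. \<exists>n\<ge>N. \<exists>G1 G2 G3.
     graph_on n G1 \<and> graph_on n G2 \<and> graph_on n G3 \<and>
     real (card G1) > edge_threshold b1 n \<and>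
     real (card G2) > edge_threshold b2 n \<and>
     real (card G3) > edge_threshold b3 n \<and> \<not> has_rainbow_triangle G1 G2 G3)"

lemma witness_not_forcing:
  assumes w: "witness a b c" shows "\<not> forcing_triple a b c"
proof
  assume "forcing_triple a b c"
  then obtain N where hN: "\<forall>n\<ge>N. \<forall>G1 G2 G3.
        graph_on n G1 \<and> graph_on n G2 \<and> graph_on n G3 \<and>
        real (card G1) > edge_threshold a n \<and>
        real (card G2) > edge_threshold b n \<and>
        real (card G3) > edge_threshold c n
        \<longrightarrow> has_rainbow_triangle G1 G2 G3"
    unfolding forcing_triple_def by blast
  from w obtain n G1 G2 G3 where "n \<ge> N" "graph_on n G1" "graph_on n G2" "graph_on n G3"
     "real (card G1) > edge_threshold a n"
     "real (card G2) > edge_threshold b n"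
     "real (card G3) > edge_threshold c n" "\<not> has_rainbow_triangle G1 G2 G3"
    unfolding witness_def by blast
  with hN show False by blast
qed

lemma rainbow_rot:
  assumes "has_rainbow_triangle G3 G1 G2" shows "has_rainbow_triangle G1 G2 G3"
proof -
  obtain a b c where h: "a \<noteq> b" "b \<noteq> c" "a \<noteq> c" "{a, b} \<in> G3" "{b, c} \<in> G1" "{a, c} \<in> G2"
    using assms unfolding has_rainbow_triangle_def by blast
  have "{c, a} = {a, c}" "{b, a} = {a, b}" by auto
  then have "b \<noteq> c \<and> c \<noteq> a \<and> b \<noteq> a \<and> {b, c} \<in> G1 \<and> {c, a} \<in> G2 \<and> {b, a} \<in> G3"
    using h by simp
  then show ?thesis unfolding has_rainbow_triangle_def by blast
qed

lemma witness_rot: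
  assumes w: "witness b1 b2 b3" shows "witness b3 b1 b2"
  unfolding witness_def
proof
  fix N
  from w obtain n G1 G2 G3 where "n \<ge> N" "graph_on n G1" "graph_on n G2" "graph_on n G3"
     "real (card G1) > edge_threshold b1 n"
     "real (card G2) > edge_threshold b2 n"
     "real (card G3) > edge_threshold b3 n" "\<not> has_rainbow_triangle G1 G2 G3"
    unfolding witness_def by blast
  moreover then have "\<not> has_rainbow_triangle G3 G1 G2" using rainbow_rot by blast
  ultimately show "\<exists>n\<ge>N. \<exists>G1 G2 G3. graph_on n G1 \<and> graph_on n G2 \<and> graph_on n G3 \<and>
     real (card G1) > edge_threshold b3 n \<and>
     real (card G2) > edge_threshold b1 n \<and>
     real (card G3) > edge_threshold b2 n \<and> \<not> has_rainbow_triangle G1 G2 G3"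
    by blast
qed

lemma thr: "real (card G) > b/2 * (real n)^2 \<Longrightarrow> real (card G) > edge_threshold b n"
  unfolding edge_threshold_def by linarith

lemma thr_full: "card G = n choose 2 \<Longrightarrow> real (card G) > edge_threshold b n"
  unfolding edge_threshold_def by simp

lemma nat_ceil_ge: "real (nat \<lceil>r\<rceil>) \<ge> r"
  by linarith

lemma big_n:
  fixes g :: real and n :: nat
  assumes "g > 0" "real n \<ge> 7 / g"
  shows "g * n > 6"
proof -
  have "g * (7/g) = 7" using assms by simp
  moreover have "g * (7/g) \<le> g * n" using assms by (intro mult_left_mono) auto
  ultimately show ?thesis by linarith
qed

lemma Fam:
  fixes x y b1 b2 b3 :: real
  assumes x0: "0 \<le> x" and y0: "0 \<le> y" and xy: "x + y \<le> 1"
    and h1: "b1 < x^2 + y^2" and h2: "b2 < x^2 + (1 - x - y)^2"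
    and h3: "b3 < 1 - x^2 \<or> x = 0"
  shows "witness b1 b2 b3"
  unfolding witness_def
proof
  fix N :: nat
  define z where "z = 1 - x - y"
  have z0: "z \<ge> 0" using xy z_def by simp
  define g1 where "g1 = x^2 + y^2 - b1"
  define g2 where "g2 = x^2 + z^2 - b2"
  define g3 where "g3 = 1 - x^2 - b3"
  have g1p: "g1 > 0" using h1 g1_def by simp
  have g2p: "g2 > 0" using h2 g2_def z_def by simp
  define n where "n = N + nat \<lceil>7/g1\<rceil> + nat \<lceil>7/g2\<rceil> + (if g3 > 0 then nat \<lceil>7/g3\<rceil> else 0) + 1"
  have nN: "n \<ge> N" unfolding n_def by simp
  have npos: "real n > 0" unfolding n_def by simp
  have ng1: "real n \<ge> real (nat \<lceil>7/g1\<rceil>)" and ng2: "real n \<ge> real (nat \<lceil>7/g2\<rceil>)"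
    unfolding n_def by simp_all
  have ng3: "g3 > 0 \<Longrightarrow> real n \<ge> real (nat \<lceil>7/g3\<rceil>)"
    unfolding n_def by simp
  have n1: "g1 * n > 6"
    using big_n[OF g1p order_trans[OF nat_ceil_ge[of "7/g1"] ng1]] .
  have n2: "g2 * n > 6"
    using big_n[OF g2p order_trans[OF nat_ceil_ge[of "7/g2"] ng2]] .
  have n3: "g3 > 0 \<Longrightarrow> g3 * n > 6"
    using big_n order_trans[OF nat_ceil_ge[of "7/g3"] ng3] by blast
  have x1: "x \<le> 1" "y \<le> 1" using x0 y0 xy by auto
  define kx where "kx = nat \<lfloor>x * n\<rfloor>"
  define ky where "ky = nat \<lfloor>y * n\<rfloor>"
  have kx_le: "real kx \<le> x * n" and kx_ge: "real kx \<ge> x * n - 1"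
    unfolding kx_def using x0 by auto
  have ky_le: "real ky \<le> y * n" and ky_ge: "real ky \<ge> y * n - 1"
    unfolding ky_def using y0 by auto
  have "real kx + real ky \<le> (x + y) * n" using kx_le ky_le by (simp add: algebra_simps)
  also have "\<dots> \<le> real n" using xy npos by (simp add: mult_left_le_one_le)
  finally have kxy: "kx + ky \<le> n" by linarith
  define kz where "kz = n - (kx + ky)"
  have kz_real: "real kz = real n - kx - ky" unfolding kz_def using kxy by simp
  have "z * n = real n - x * n - y * n" unfolding z_def by (simp add: algebra_simps)
  then have kz_ge: "real kz \<ge> z * n - 1" using kz_real kx_le ky_le by linarith
  define X where "X = {..<kx}"
  define Y where "Y = {kx..<kx+ky}"
  define Z where "Z = {kx+ky..<n}"
  define V where "V = {..<n}"
  have cX: "card X = kx" and cY: "card Y = ky" and cZ: "card Z = kz" and cV: "card V = n"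
    unfolding X_def Y_def Z_def V_def kz_def by auto
  have fX: "finite X" "finite Y" "finite Z" "finite V" unfolding X_def Y_def Z_def V_def by auto
  have dXY: "X \<inter> Y = {}" and dXZ: "X \<inter> Z = {}"
    unfolding X_def Y_def Z_def by auto
  have sub: "X \<subseteq> V" "Y \<subseteq> V" "Z \<subseteq> V" unfolding X_def Y_def Z_def V_def using kxy by auto
  define G1 where "G1 = KK X \<union> KK Y"
  define G2 where "G2 = KK X \<union> KK Z"
  define G3 where "G3 = KK V - KK X"
  have gr: "graph_on n G1" "graph_on n G2" "graph_on n G3"
    unfolding G1_def G2_def G3_def using sub
    by (auto intro!: graph_on_Un graph_on_Diff KK_graph simp: V_def)
  have cG1: "card G1 = (kx choose 2) + (ky choose 2)"
    unfolding G1_def using fX dXY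
    by (simp add: card_Un_disjoint KK_finite KK_disj KK_card cX cY)
  have cG2: "card G2 = (kx choose 2) + (kz choose 2)"
    unfolding G2_def using fX dXZ
    by (simp add: card_Un_disjoint KK_finite KK_disj KK_card cX cZ)
  have cG3: "card G3 = (n choose 2) - (kx choose 2)"
    unfolding G3_def using fX sub
    by (simp add: card_Diff_subset KK_finite KK_mono KK_card cX cV)
  have cG3le: "kx choose 2 \<le> n choose 2"
    using sub(1) fX by (metis KK_card KK_mono KK_finite cV cX card_mono)
  have e1: "2 * real (card G1) \<ge> (x^2 + y^2) * (real n)^2 - 6 * n"
  proof -
    have "2 * real (card G1) = real kx * (real kx - 1) + real ky * (real ky - 1)"
      using cG1 choose2_real[of kx] choose2_real[of ky] by simp
    moreover have "real kx * (real kx - 1) \<ge> x^2 * (real n)^2 - 3 * n"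
      using lower_bd[where p=x and m=kx and n=n] x0 x1 kx_ge by simp
    moreover have "real ky * (real ky - 1) \<ge> y^2 * (real n)^2 - 3 * n"
      using lower_bd[where p=y and m=ky and n=n] y0 x1 ky_ge by simp
    ultimately show ?thesis by (simp add: algebra_simps)
  qed
  have "g1 * n * n > 6 * n" using n1 npos by (simp add: mult_strict_right_mono)
  then have "(x^2 + y^2) * (real n)^2 - 6 * n > b1 * (real n)^2"
    unfolding g1_def by (simp add: power2_eq_square algebra_simps)
  then have t1: "real (card G1) > edge_threshold b1 n"
    using e1 by (intro thr) linarith
  have z1: "z \<le> 1" using z_def x0 y0 by simp
  have e2: "2 * real (card G2) \<ge> (x^2 + z^2) * (real n)^2 - 6 * n"
  proof -
    have "2 * real (card G2) = real kx * (real kx - 1) + real kz * (real kz - 1)"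
      using cG2 choose2_real[of kx] choose2_real[of kz] by simp
    moreover have "real kx * (real kx - 1) \<ge> x^2 * (real n)^2 - 3 * n"
      using lower_bd[where p=x and m=kx and n=n] x0 x1 kx_ge by simp
    moreover have "real kz * (real kz - 1) \<ge> z^2 * (real n)^2 - 3 * n"
      using lower_bd[where p=z and m=kz and n=n] z0 z1 kz_ge by simp
    ultimately show ?thesis by (simp add: algebra_simps)
  qed
  have "g2 * n * n > 6 * n" using n2 npos by (simp add: mult_strict_right_mono)
  then have "(x^2 + z^2) * (real n)^2 - 6 * n > b2 * (real n)^2"
    unfolding g2_def by (simp add: power2_eq_square algebra_simps)
  then have t2: "real (card G2) > edge_threshold b2 n"
    using e2 by (intro thr) linarith
  have t3: "real (card G3) > edge_threshold b3 n"
  proof (cases "g3 > 0")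
    case True
    have "2 * real (card G3) = real n * (real n - 1) - real kx * (real kx - 1)"
      using cG3 cG3le choose2_real[of kx] choose2_real[of n] by (simp add: of_nat_diff)
    moreover have "real kx * (real kx - 1) \<le> x^2 * (real n)^2"
    proof -
      have "real kx * (real kx - 1) \<le> real kx * real kx" by (simp add: algebra_simps)
      also have "\<dots> \<le> (x * n) * (x * n)" using kx_le by (intro mult_mono) auto
      finally show ?thesis by (simp add: power2_eq_square algebra_simps)
    qed
    ultimately have e3: "2 * real (card G3) \<ge> (1 - x^2) * (real n)^2 - n"
      by (simp add: power2_eq_square algebra_simps)
    have "g3 * n * n > 6 * n" using n3[OF True] npos by (simp add: mult_strict_right_mono)
    then have "(1 - x^2) * (real n)^2 - n > b3 * (real n)^2"
      unfolding g3_def using npos by (simp add: power2_eq_square algebra_simps)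
    then show ?thesis using e3 by (intro thr) linarith
  next
    case False
    then have "x = 0" using h3 g3_def by auto
    then have "kx = 0" unfolding kx_def by simp
    then show ?thesis using cG3 by (intro thr_full) (simp add: numeral_2_eq_2)
  qed
  have nr: "\<not> has_rainbow_triangle G1 G2 G3"
  proof
    assume "has_rainbow_triangle G1 G2 G3"
    then obtain a b c where abc: "a \<noteq> b" "b \<noteq> c" "a \<noteq> c"
      "{a, b} \<in> G1" "{b, c} \<in> G2" "{a, c} \<in> G3"
      unfolding has_rainbow_triangle_def by blast
    then have A: "(a \<in> X \<and> b \<in> X) \<or> (a \<in> Y \<and> b \<in> Y)"
      and B: "(b \<in> X \<and> c \<in> X) \<or> (b \<in> Z \<and> c \<in> Z)"
      and C: "\<not> (a \<in> X \<and> c \<in> X)"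
      unfolding G1_def G2_def G3_def by (auto simp: KK_mem)
    show False using A B C unfolding X_def Y_def Z_def by auto
  qed
  show "\<exists>n\<ge>N. \<exists>G1 G2 G3. graph_on n G1 \<and> graph_on n G2 \<and> graph_on n G3 \<and>
     real (card G1) > edge_threshold b1 n \<and>
     real (card G2) > edge_threshold b2 n \<and>
     real (card G3) > edge_threshold b3 n \<and> \<not> has_rainbow_triangle G1 G2 G3"
    apply (rule exI[where x=n])
    apply (rule conjI[OF nN])
    apply (rule exI[where x=G1])
    apply (rule exI[where x=G2])
    apply (rule exI[where x=G3])
    using gr t1 t2 t3 nr by simp
qed



lemma case_b:
  fixes a1 a2 a3 :: real
  assumes "0 \<le> a3" "a3 \<le> a2" "a2 < 1/4"
  shows "witness a1 a2 a3"
proof -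
  have "witness a2 a3 a1"
    using assms by (intro Fam[where x=0 and y="1/2"]) (auto simp: power2_eq_square)
  then show ?thesis by (rule witness_rot)
qed

lemma case_c:
  fixes a1 a2 a3 :: real
  assumes "0 \<le> a3" "a3 \<le> a2" "a2 \<le> a1" "a1 \<le> 1" "a1 + a2 < 1"
  shows "witness a1 a2 a3"
proof -
  define s where "s = (a2 + 1 - a1) / 2"
  define b where "b = sqrt s"
  have s0: "s \<ge> 0" "s \<le> 1" using assms s_def by auto
  have b2: "b^2 = s" unfolding b_def using s0 by simp
  have b0: "b \<ge> 0" unfolding b_def using s0 by simp
  have b1: "b \<le> 1" unfolding b_def using s0 by simp
  have "witness a2 a3 a1"
  proof (rule Fam[where x=b and y=0])
    show "a2 < b^2 + 0^2" using b2 s_def assms by simp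
    have "a2 < b^2" using b2 s_def assms by simp
    then show "a3 < b^2 + (1 - b - 0)^2" using zero_le_power2[of "1 - b - 0"] assms by linarith
    show "a1 < 1 - b^2 \<or> b = 0" using b2 s_def assms by simp
  qed (use b0 b1 in auto)
  then show ?thesis by (rule witness_rot)
qed

lemma case_d:
  fixes a1 a2 a3 x y :: real
  assumes "0 \<le> a3" "a3 \<le> a2" "a2 \<le> a1" "a1 \<le> 1"
    and x0: "0 \<le> x" and y0: "0 \<le> y" and xy: "x + y \<le> 1"
    and c: "2 * x^2 + (1 - x - y)^2 < 1"
    and e1: "a1 = x^2 + y^2" and e2: "a2 = x^2 + (1 - x - y)^2"
  shows "witness a1 a2 a3"
proof (cases "a2 < 1/4 \<or> a1 + a2 < 1")
  case True
  then show ?thesis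
  proof
    assume "a2 < 1/4"
    then show ?thesis using case_b[OF assms(1,2)] by blast
  next
    assume "a1 + a2 < 1"
    then show ?thesis using case_c[OF assms(1-4)] by blast
  qed
next
  case False
  define z where "z = 1 - x - y"
  define s where "s = 1 - x"
  have z0: "z \<ge> 0" using xy z_def by simp
  have sz: "s = y + z" unfolding s_def z_def by simp
  have big: "2*x^2 + y^2 + z^2 \<ge> 1" using False e1 e2 z_def by simp
  have "(x + y + z)^2 = 1" unfolding z_def by simp
  then have "x^2 + y^2 + z^2 + 2*x*s + 2*y*z = 1"
    unfolding sz by (simp add: power2_eq_square algebra_simps)
  then have key: "x^2 \<ge> 2*x*s + 2*y*z" using big by linarith
  have yz0: "y*z \<ge> 0" using y0 z0 by simp
  have xpos: "x > 0"
  proof (rule ccontr)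
    assume "\<not> x > 0"
    then have x00: "x = 0" using x0 by simp
    then have "y * z = 0" using key yz0 by simp
    then have "y = 0 \<or> z = 0" by simp
    moreover have "y + z = 1" using x00 z_def by simp
    ultimately show False using False e1 e2 x00 z_def assms(3) by auto
  qed
  have spos: "s > 0"
  proof (rule ccontr)
    assume "\<not> s > 0"
    then have "s = 0" using sz y0 z0 by simp
    then have "x = 1" "z = 0" using s_def sz y0 z0 by auto
    then show False using c z_def by simp
  qed
  have "x * x \<ge> x * (2*s)" using key yz0 by (simp add: power2_eq_square algebra_simps)
  then have x2s: "x \<ge> 2*s" using xpos by simp
  have ys: "y \<le> s" "z \<le> s" using sz y0 z0 by auto
  have "x * s \<ge> 2*s*s" using x2s spos by (simp add: mult_right_mono)
  moreover have "y * y \<le> s * s" "z * z \<le> s * s" using ys y0 z0 by (auto intro: mult_mono)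
  moreover have "s * s > 0" using spos by simp
  moreover have "y^2 = y * y" "z^2 = z * z" by (simp_all add: power2_eq_square)
  ultimately have py: "x * s - y^2 > 0" and pz: "x * s - z^2 > 0"
    by linarith+
  define t where "t = (1 - 2*x^2 - z^2) / 6"
  have tpos: "t > 0" using c z_def t_def by simp
  have t6: "6 * t = 1 - 2*x^2 - z^2" using t_def by simp
  have t1: "t \<le> 1" using t6 zero_le_power2[of x] zero_le_power2[of z] by linarith
  define x' where "x' = x + t * s"
  define y' where "y' = (1 - t) * y"
  have z': "1 - x' - y' = (1 - t) * z" unfolding x'_def y'_def z_def s_def by (simp add: algebra_simps)
  have x'0: "x' \<ge> 0" unfolding x'_def using x0 tpos spos by simp
  have y'0: "y' \<ge> 0" unfolding y'_def using y0 t1 by simp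
  have "(1 - t) * z \<ge> 0" using t1 z0 by simp
  then have x'y': "x' + y' \<le> 1" using z' by linarith
  have tt: "t * t \<ge> 0" by simp
  have eqA: "x'^2 + y'^2 - (x^2 + y^2) = 2 * (t * (x*s - y^2)) + (t*t) * (s*s) + (t*t) * (y*y)"
    unfolding x'_def y'_def by (simp add: power2_eq_square algebra_simps)
  have eqB: "x'^2 + ((1-t)*z)^2 - (x^2 + z^2) = 2 * (t * (x*s - z^2)) + (t*t) * (s*s) + (t*t) * (z*z)"
    unfolding x'_def by (simp add: power2_eq_square algebra_simps)
  have pA: "t * (x*s - y^2) > 0" using tpos py by simp
  have pB: "t * (x*s - z^2) > 0" using tpos pz by simp
  have q1: "(t*t) * (s*s) \<ge> 0" "(t*t) * (y*y) \<ge> 0" "(t*t) * (z*z) \<ge> 0" by simp_all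
  have A: "a1 < x'^2 + y'^2" using eqA pA q1 e1 by linarith
  have e2z: "a2 = x^2 + z^2" using e2 z_def by simp
  have "a2 < x'^2 + ((1 - t) * z)^2" using eqB pB q1 e2z by linarith
  then have B: "a2 < x'^2 + (1 - x' - y')^2" by (simp only: z')
  have s1: "s \<le> 1" using s_def x0 by simp
  have xs1: "x * s \<le> 1" using x0 s1 spos xy y0 by (simp add: mult_le_one)
  have ss1: "s * s \<le> 1" using s1 spos by (simp add: mult_le_one)
  have "t * (s * s) \<le> 1" using t1 tpos ss1 by (simp add: mult_le_one)
  then have "t * (t * (s * s)) \<le> t * 1" using tpos by (intro mult_left_mono) auto
  moreover have "t * (x * s) \<le> t * 1" using xs1 tpos by (intro mult_left_mono) auto
  moreover have "x'^2 = x^2 + 2 * (t * (x * s)) + t * (t * (s * s))"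
    unfolding x'_def by (simp add: power2_eq_square algebra_simps)
  ultimately have "x'^2 \<le> x^2 + 3 * t" by simp
  moreover have cz: "2 * x^2 + z^2 < 1" using c z_def by simp
  ultimately have "a3 < 1 - x'^2" using t6 e2z assms(2) by linarith
  then have C: "a3 < 1 - x'^2 \<or> x' = 0" by simp
  show ?thesis using Fam[OF x'0 y'0 x'y' A B C] .
qed

lemma tau_facts: "9 * tau^2 - 8 * tau + 1 = 0" "tau > 1/8" "tau < 1/6"
proof -
  have s7: "sqrt 7 * sqrt 7 = 7" by simp
  show "9 * tau^2 - 8 * tau + 1 = 0"
    unfolding tau_def power2_eq_square using s7 by (simp add: field_simps algebra_simps)
  have "sqrt 7 < sqrt ((27/10)^2)" by (subst real_sqrt_less_iff) (simp add: power2_eq_square)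
  then have "sqrt 7 < 27/10" by simp
  then show "tau > 1/8" unfolding tau_def by simp
  have "sqrt ((5/2)^2) < sqrt 7" by (subst real_sqrt_less_iff) (simp add: power2_eq_square)
  then have "sqrt 7 > 5/2" by simp
  then show "tau < 1/6" unfolding tau_def by simp
qed

lemma case_a:
  fixes a1 a2 a3 :: real
  assumes "0 \<le> a3" "a3 \<le> a2" "a2 \<le> a1" "a1 < (1 + tau^2) / 2"
  shows "witness a1 a2 a3"
proof -
  define a0 where "a0 = (1 + tau^2) / 2"
  define d where "d = (a0 - a1) / 2"
  have tq: "9 * tau^2 - 8 * tau + 1 = 0" "tau > 1/8" "tau < 1/6" by (rule tau_facts)+
  have dpos: "d > 0" using assms a0_def d_def by simp
  have "tau * tau < (1/6) * (1/6)" using tq by (intro mult_strict_mono) auto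
  then have tau2: "tau^2 < 1/36" by (simp add: power2_eq_square)
  have d4: "d * 4 = 1 + tau^2 - 2 * a1" unfolding d_def a0_def by (simp add: field_simps)
  have "a1 \<ge> 0" using assms by linarith
  then have dle: "d \<le> 1/3" using d4 tau2 by linarith
  define x where "x = 1 - 2*tau - d"
  define y where "y = tau + d/2"
  have x0: "x \<ge> 0" using x_def tq dle by simp
  have y0: "y \<ge> 0" using y_def tq dpos by simp
  have z: "1 - x - y = y" unfolding x_def y_def by simp
  have xy: "x + y \<le> 1" using z y0 by simp
  have sq1: "(1 - 2*tau)^2 = 1 - 4*tau + 4*(tau*tau)" by (simp add: power2_eq_square algebra_simps)
  have sq2: "tau^2 = tau*tau" by (simp add: power2_eq_square)
  have hx: "2*((1-2*tau)^2+tau^2) - (1+tau^2) = 9*tau^2 - 8*tau + 1"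
    by (simp add: power2_eq_square algebra_simps)
  then have "2*((1-2*tau)^2+tau^2) - (1+tau^2) = 0" using tq(1) by simp
  then have a0x: "a0 = (1 - 2*tau)^2 + tau^2" unfolding a0_def by simp
  have hy: "2*(1 - (1-2*tau)^2) - (1+tau^2) = -(9*tau^2 - 8*tau + 1)"
    by (simp add: power2_eq_square algebra_simps)
  then have "2*(1 - (1-2*tau)^2) - (1+tau^2) = 0" using tq(1) by simp
  then have a0y: "a0 = 1 - (1 - 2*tau)^2" unfolding a0_def by simp
  define p where "p = tau * d"
  define q where "q = d * d"
  have eq1: "x^2 + y^2 - a0 = -2*d + 5 * p + 5/4 * q"
    unfolding x_def y_def a0x p_def q_def by (simp add: power2_eq_square algebra_simps)
  have p1: "p > 0" "q > 0" unfolding p_def q_def using tq dpos by simp_all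
  have dd: "a1 = a0 - 2 * d" unfolding d_def by (simp add: field_simps)
  have A: "a1 < x^2 + y^2" using eq1 p1 dd by linarith
  have B: "a2 < x^2 + (1 - x - y)^2" using A z assms by simp
  define r where "r = d * (2 * (1 - 2*tau) - d)"
  have eq3: "1 - x^2 - a0 = r"
    unfolding x_def a0y r_def by (simp add: power2_eq_square algebra_simps)
  have "r > 0" unfolding r_def using dpos dle tq by (intro mult_pos_pos) auto
  then have "a3 < 1 - x^2" using eq3 assms a0_def by linarith
  then have C: "a3 < 1 - x^2 \<or> x = 0" by simp
  show ?thesis using Fam[OF x0 y0 xy A B C] .
qed


theorem mainTheorem4:
  fixes \<alpha>1 \<alpha>2 \<alpha>3 :: real
  assumes "0 \<le> \<alpha>3" "\<alpha>3 \<le> \<alpha>2" "\<alpha>2 \<le> \<alpha>1" "\<alpha>1 \<le> 1"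
  assumes "\<alpha>1 < (1 + tau^2) / 2
        \<or> \<alpha>2 < 1/4
        \<or> \<alpha>1 + \<alpha>2 < 1
        \<or> (\<exists>x y :: real. 0 \<le> x \<and> 0 \<le> y \<and> x + y \<le> 1 \<and>
              2 * x^2 + (1 - x - y)^2 < 1 \<and>
              \<alpha>1 = x^2 + y^2 \<and> \<alpha>2 = x^2 + (1 - x - y)^2)"
  shows "\<not> forcing_triple \<alpha>1 \<alpha>2 \<alpha>3"
proof -
  have "witness \<alpha>1 \<alpha>2 \<alpha>3"
    using assms(5)
  proof (elim disjE exE conjE)
    assume "\<alpha>1 < (1 + tau^2) / 2"
    then show ?thesis by (rule case_a[OF assms(1-3)])
  next
    assume "\<alpha>2 < 1/4"
    then show ?thesis by (rule case_b[OF assms(1,2)])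
  next
    assume "\<alpha>1 + \<alpha>2 < 1"
    then show ?thesis by (rule case_c[OF assms(1-4)])
  next
    fix x y :: real
    assume "0 \<le> x" "0 \<le> y" "x + y \<le> 1" "2 * x^2 + (1 - x - y)^2 < 1"
      "\<alpha>1 = x^2 + y^2" "\<alpha>2 = x^2 + (1 - x - y)^2"
    then show ?thesis by (rule case_d[OF assms(1-4)])
  qed
  then show ?thesis by (rule witness_not_forcing)
qed

end
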